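(* Let $\pi:G\times X\to X$ be a continuous $\pi$-uniform action of a topological group $G$ on a Hausdorff non-archimedean uniform space $(X,\mu)$. Then there exist a Hausdorff non-archimedean Boolean topological group $E$, on which $G$ acts continuously by group automorphisms, and a $G$-equivariant map $\alpha:X\to E$ which is a uniform embedding of $(X,\mu)$ into $E$ equipped with its (right $=$ left) group uniformity, such that $\alpha(X)$ is closed in $E$.
   Context: A uniform space $(X,\mu)$ is non-archimedean if $\mu$ has a base consisting of entourages which are equivalence relations. An action $\pi:G\times X\to X$ on a uniform space is $\pi$-uniform if for every entourage $\varepsilon\in\mu$ and $g_0\in G$ there exist $\delta\in\mu$ and a neighborhood $O$ of $g_0$ such that $(gx,gy)\in\varepsilon$ for all $(x,y)\in\delta$ and $g\in O$. A Boolean group is an abelian group with $x+x=0$ for all $x$; a topological group is non-archimedean if it has a local base at the identity consisting of open subgroups. A uniform embedding is an injective map which is a uniform isomorphism onto its image. *)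

theory Defs
  imports "HOL-Analysis.Analysis" "HOL-Algebra.Group"
begin

definition uniformity_on :: "'a set \<Rightarrow> ('a \<times> 'a) set set \<Rightarrow> bool" where
  "uniformity_on X \<mu> \<longleftrightarrow>
     \<mu> \<noteq> {} \<and>
     (\<forall>\<epsilon>\<in>\<mu>. Id_on X \<subseteq> \<epsilon> \<and> \<epsilon> \<subseteq> X \<times> X) \<and>
     (\<forall>\<epsilon>\<in>\<mu>. \<forall>\<delta>. \<epsilon> \<subseteq> \<delta> \<and> \<delta> \<subseteq> X \<times> X \<longrightarrow> \<delta> \<in> \<mu>) \<and>
     (\<forall>\<epsilon>\<in>\<mu>. \<forall>\<delta>\<in>\<mu>. \<epsilon> \<inter> \<delta> \<in> \<mu>) \<and>
     (\<forall>\<epsilon>\<in>\<mu>. \<epsilon>\<inverse> \<in> \<mu>) \<and>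
     (\<forall>\<epsilon>\<in>\<mu>. \<exists>\<delta>\<in>\<mu>. \<delta> O \<delta> \<subseteq> \<epsilon>)"

definition hausdorff_uniformity :: "'a set \<Rightarrow> ('a \<times> 'a) set set \<Rightarrow> bool" where
  "hausdorff_uniformity X \<mu> \<longleftrightarrow> (\<forall>x\<in>X. \<forall>y\<in>X. x \<noteq> y \<longrightarrow> (\<exists>\<epsilon>\<in>\<mu>. (x, y) \<notin> \<epsilon>))"

definition non_archimedean_uniformity :: "'a set \<Rightarrow> ('a \<times> 'a) set set \<Rightarrow> bool" where
  "non_archimedean_uniformity X \<mu> \<longleftrightarrow> (\<forall>\<epsilon>\<in>\<mu>. \<exists>\<delta>\<in>\<mu>. \<delta> \<subseteq> \<epsilon> \<and> equiv X \<delta>)"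

definition uniform_topology :: "'a set \<Rightarrow> ('a \<times> 'a) set set \<Rightarrow> 'a topology" where
  "uniform_topology X \<mu> =
     topology (\<lambda>U. U \<subseteq> X \<and> (\<forall>x\<in>U. \<exists>\<epsilon>\<in>\<mu>. \<epsilon> `` {x} \<subseteq> U))"

definition uniformly_continuous_map ::
  "'a set \<Rightarrow> ('a \<times> 'a) set set \<Rightarrow> ('b \<times> 'b) set set \<Rightarrow> ('a \<Rightarrow> 'b) \<Rightarrow> bool" where
  "uniformly_continuous_map X \<mu> \<nu> f \<longleftrightarrow>
     (\<forall>\<epsilon>\<in>\<nu>. \<exists>\<delta>\<in>\<mu>. \<forall>x\<in>X. \<forall>y\<in>X. (x, y) \<in> \<delta> \<longrightarrow> (f x, f y) \<in> \<epsilon>)"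

definition uniform_embedding ::
  "'a set \<Rightarrow> ('a \<times> 'a) set set \<Rightarrow> 'b set \<Rightarrow> ('b \<times> 'b) set set \<Rightarrow> ('a \<Rightarrow> 'b) \<Rightarrow> bool" where
  "uniform_embedding X \<mu> Y \<nu> f \<longleftrightarrow>
     inj_on f X \<and> f ` X \<subseteq> Y \<and>
     uniformly_continuous_map X \<mu> \<nu> f \<and>
     (\<forall>\<epsilon>\<in>\<mu>. \<exists>\<delta>\<in>\<nu>. \<forall>x\<in>X. \<forall>y\<in>X. (f x, f y) \<in> \<delta> \<longrightarrow> (x, y) \<in> \<epsilon>)"

definition topological_group :: "('g, 'm) monoid_scheme \<Rightarrow> 'g topology \<Rightarrow> bool" where
  "topological_group G T \<longleftrightarrow>
     group G \<and> topspace T = carrier G \<and>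
     continuous_map (prod_topology T T) T (\<lambda>(g, h). g \<otimes>\<^bsub>G\<^esub> h) \<and>
     continuous_map T T (\<lambda>g. inv\<^bsub>G\<^esub> g)"

definition non_archimedean_group :: "('g, 'm) monoid_scheme \<Rightarrow> 'g topology \<Rightarrow> bool" where
  "non_archimedean_group G T \<longleftrightarrow>
     (\<forall>U. openin T U \<and> \<one>\<^bsub>G\<^esub> \<in> U \<longrightarrow> (\<exists>H. subgroup H G \<and> openin T H \<and> H \<subseteq> U))"

definition boolean_group :: "('g, 'm) monoid_scheme \<Rightarrow> bool" where
  "boolean_group G \<longleftrightarrow> comm_group G \<and> (\<forall>x\<in>carrier G. x \<otimes>\<^bsub>G\<^esub> x = \<one>\<^bsub>G\<^esub>)"

text \<open>Right group uniformity: entourages contain some \<open>{(x,y). y x\<^sup>-\<^sup>1 \<in> U}\<close>, \<open>U\<close> an open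
  neighbourhood of the identity (for abelian groups it coincides with the left one).\<close>
definition right_group_uniformity :: "('g, 'm) monoid_scheme \<Rightarrow> 'g topology \<Rightarrow> ('g \<times> 'g) set set" where
  "right_group_uniformity G T =
     {\<epsilon>. \<epsilon> \<subseteq> carrier G \<times> carrier G \<and>
          (\<exists>U. openin T U \<and> \<one>\<^bsub>G\<^esub> \<in> U \<and>
               {(x, y). x \<in> carrier G \<and> y \<in> carrier G \<and> y \<otimes>\<^bsub>G\<^esub> inv\<^bsub>G\<^esub> x \<in> U} \<subseteq> \<epsilon>)}"

definition group_action_on :: "('g, 'm) monoid_scheme \<Rightarrow> 'x set \<Rightarrow> ('g \<Rightarrow> 'x \<Rightarrow> 'x) \<Rightarrow> bool" where
  "group_action_on G X \<pi> \<longleftrightarrow>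
     (\<forall>g\<in>carrier G. \<forall>x\<in>X. \<pi> g x \<in> X) \<and>
     (\<forall>x\<in>X. \<pi> \<one>\<^bsub>G\<^esub> x = x) \<and>
     (\<forall>g\<in>carrier G. \<forall>h\<in>carrier G. \<forall>x\<in>X. \<pi> (g \<otimes>\<^bsub>G\<^esub> h) x = \<pi> g (\<pi> h x))"

definition continuous_action ::
  "('g, 'm) monoid_scheme \<Rightarrow> 'g topology \<Rightarrow> 'x topology \<Rightarrow> ('g \<Rightarrow> 'x \<Rightarrow> 'x) \<Rightarrow> bool" where
  "continuous_action G T S \<pi> \<longleftrightarrow>
     group_action_on G (topspace S) \<pi> \<and>
     continuous_map (prod_topology T S) S (\<lambda>(g, x). \<pi> g x)"

definition pi_uniform ::
  "('g, 'm) monoid_scheme \<Rightarrow> 'g topology \<Rightarrow> 'x set \<Rightarrow> ('x \<times> 'x) set set \<Rightarrow> ('g \<Rightarrow> 'x \<Rightarrow> 'x) \<Rightarrow> bool" where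
  "pi_uniform G T X \<mu> \<pi> \<longleftrightarrow>
     (\<forall>\<epsilon>\<in>\<mu>. \<forall>g0\<in>carrier G. \<exists>\<delta>\<in>\<mu>. \<exists>V. openin T V \<and> g0 \<in> V \<and>
        (\<forall>(x, y)\<in>\<delta>. \<forall>g\<in>V. (\<pi> g x, \<pi> g y) \<in> \<epsilon>))"

end

theory Submission imports Defs begin

definition sd :: "'a set \<Rightarrow> 'a set \<Rightarrow> 'a set" where
  "sd S T = (S - T) \<union> (T - S)"

definition satur :: "'p set \<Rightarrow> ('p \<times> 'p) set \<Rightarrow> 'p set \<Rightarrow> bool" where
  "satur Y e C \<longleftrightarrow> C \<subseteq> Y \<and> (\<forall>x y. (x, y) \<in> e \<longrightarrow> x \<in> C \<longrightarrow> y \<in> C)"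

definition NN :: "'p set \<Rightarrow> ('p \<times> 'p) set \<Rightarrow> 'p set set" where
  "NN Y e = {S. finite S \<and> S \<subseteq> Y \<and> (\<forall>C. satur Y e C \<longrightarrow> even (card (S \<inter> C)))}"

lemma even_sd:
  assumes "finite A" "finite B"
  shows "even (card (sd A B)) \<longleftrightarrow> (even (card A) \<longleftrightarrow> even (card B))"
proof -
  have a: "card A = card (A - B) + card (A \<inter> B)"
    using card_Int_Diff[OF assms(1), of B] by simp
  have b: "card B = card (B - A) + card (A \<inter> B)"
    using card_Int_Diff[OF assms(2), of A] by (simp add: Int_commute)
  have c: "card (sd A B) = card (A - B) + card (B - A)"
    unfolding sd_def using assms by (subst card_Un_disjoint) auto
  show ?thesis using a b c by presburger
qed

lemma sd_Int: "sd A B \<inter> C = sd (A \<inter> C) (B \<inter> C)"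
  unfolding sd_def by auto

lemma sd_assoc: "sd (sd A B) C = sd A (sd B C)"
  unfolding sd_def by auto
lemma sd_comm: "sd A B = sd B A"
  unfolding sd_def by auto
lemma sd_empty[simp]: "sd {} A = A" "sd A {} = A" "sd A A = {}"
  unfolding sd_def by auto
lemma sd_swap: "sd S A = sd T A' \<Longrightarrow> sd S T = sd A A'"
  unfolding sd_def set_eq_iff by (metis DiffE DiffI UnE UnI1 UnI2)
lemma sd_id: "sd X Z = sd W (sd (sd X W) Z)"
  unfolding sd_def by auto
lemma sd_cancel: "sd A (sd A B) = B"
  unfolding sd_def by auto
lemma finite_sd[simp]: "finite A \<Longrightarrow> finite B \<Longrightarrow> finite (sd A B)"
  unfolding sd_def by auto
lemma sd_sub: "A \<subseteq> Y \<Longrightarrow> B \<subseteq> Y \<Longrightarrow> sd A B \<subseteq> Y"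
  unfolding sd_def by auto

lemma NN_sd: "A \<in> NN Y e \<Longrightarrow> B \<in> NN Y e \<Longrightarrow> sd A B \<in> NN Y e"
proof -
  assume a: "A \<in> NN Y e" and b: "B \<in> NN Y e"
  { fix C assume "satur Y e C"
    hence "even (card (A \<inter> C))" "even (card (B \<inter> C))" using a b unfolding NN_def by auto
    moreover have "finite (A \<inter> C)" "finite (B \<inter> C)" using a b unfolding NN_def by auto
    ultimately have "even (card (sd A B \<inter> C))" unfolding sd_Int using even_sd by blast }
  thus ?thesis using a b sd_sub[of A Y B] unfolding NN_def by auto
qed

lemma NN_empty: "{} \<in> NN Y e"
  unfolding NN_def by auto

lemma satur_mono: "e' \<subseteq> e \<Longrightarrow> satur Y e C \<Longrightarrow> satur Y e' C"
  unfolding satur_def by blast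

lemma NN_mono: "e' \<subseteq> e \<Longrightarrow> NN Y e' \<subseteq> NN Y e"
  unfolding NN_def using satur_mono by blast

lemma satur_class: "equiv Y e \<Longrightarrow> a \<in> Y \<Longrightarrow> satur Y e (e `` {a})"
  unfolding satur_def equiv_def refl_on_def trans_def by blast

lemma pair_in_NN:
  assumes "equiv Y e" "(x, y) \<in> e"
  shows "sd {y} {x} \<in> NN Y e"
proof -
  have xy: "x \<in> Y" "y \<in> Y" using assms unfolding equiv_def refl_on_def by auto
  { fix C assume C: "satur Y e C"
    have "x \<in> C \<longleftrightarrow> y \<in> C" using C assms unfolding satur_def equiv_def sym_def by blast
    hence "even (card (sd {y} {x} \<inter> C))"
      by (cases "x = y"; cases "x \<in> C") (auto simp: sd_def insert_Diff_if) }
  thus ?thesis using xy unfolding NN_def sd_def by auto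
qed

lemma pair_NN_iff:
  assumes "equiv Y e" "x \<in> Y" "y \<in> Y"
  shows "sd {y} {x} \<in> NN Y e \<longleftrightarrow> (x, y) \<in> e"
proof
  assume h: "sd {y} {x} \<in> NN Y e"
  show "(x, y) \<in> e"
  proof (rule ccontr)
    assume n: "(x, y) \<notin> e"
    hence "x \<noteq> y" using assms unfolding equiv_def refl_on_def by auto
    have "sd {y} {x} \<inter> e `` {x} = {x}"
      using n \<open>x \<noteq> y\<close> assms unfolding sd_def equiv_def refl_on_def by auto
    thus False using h satur_class[OF assms(1,2)] unfolding NN_def by fastforce
  qed
next
  assume "(x, y) \<in> e" thus "sd {y} {x} \<in> NN Y e" by (rule pair_in_NN[OF assms(1)])
qed

lemma finite_open_nbhd:
  assumes "finite S0" "g0 \<in> topspace T"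
    and "\<forall>x\<in>S0. \<exists>V. openin T V \<and> g0 \<in> V \<and> (\<forall>g\<in>V. P g x)"
  shows "\<exists>V. openin T V \<and> g0 \<in> V \<and> (\<forall>g\<in>V. \<forall>x\<in>S0. P g x)"
  using assms
proof (induction S0 rule: finite_induct)
  case empty then show ?case by (intro exI[of _ "topspace T"]) auto
next
  case (insert x F)
  then obtain V where V: "openin T V" "g0 \<in> V" "\<forall>g\<in>V. \<forall>x\<in>F. P g x" by auto
  obtain V' where V': "openin T V'" "g0 \<in> V'" "\<forall>g\<in>V'. P g x" using insert.prems by auto
  show ?case using V V' by (intro exI[of _ "V \<inter> V'"]) auto
qed

locale core =
  fixes G :: "('g, 'm) monoid_scheme" and T :: "'g topology"
    and Y :: "'p set" and B :: "('p \<times> 'p) set set" and \<rho> :: "'g \<Rightarrow> 'p \<Rightarrow> 'p"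
  assumes tg: "topological_group G T"
    and Bne: "B \<noteq> {}"
    and Beq: "\<And>e. e \<in> B \<Longrightarrow> equiv Y e"
    and Bint: "\<And>e e'. e \<in> B \<Longrightarrow> e' \<in> B \<Longrightarrow> \<exists>e''\<in>B. e'' \<subseteq> e \<inter> e'"
    and Bsep: "\<And>x y. x \<in> Y \<Longrightarrow> y \<in> Y \<Longrightarrow> x \<noteq> y \<Longrightarrow> \<exists>e\<in>B. (x, y) \<notin> e"
    and act: "group_action_on G Y \<rho>"
    and cont1: "\<And>e g0 x. e \<in> B \<Longrightarrow> g0 \<in> carrier G \<Longrightarrow> x \<in> Y \<Longrightarrow>
                  \<exists>V. openin T V \<and> g0 \<in> V \<and> (\<forall>g\<in>V. (\<rho> g x, \<rho> g0 x) \<in> e)"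
    and cont2: "\<And>e g0. e \<in> B \<Longrightarrow> g0 \<in> carrier G \<Longrightarrow>
                  \<exists>d\<in>B. \<exists>V. openin T V \<and> g0 \<in> V \<and> (\<forall>g\<in>V. \<forall>x y. (x, y) \<in> d \<longrightarrow> (\<rho> g x, \<rho> g y) \<in> e)"
begin

definition "Fin = {S. finite S \<and> S \<subseteq> Y}"
definition EE :: "'p set monoid" where "EE = \<lparr>carrier = Fin, mult = sd, one = {}\<rparr>"
definition "openE U \<longleftrightarrow> U \<subseteq> Fin \<and> (\<forall>S\<in>U. \<exists>e\<in>B. \<forall>A\<in>NN Y e. sd S A \<in> U)"
definition "TE = topology openE"
definition "\<tau> g S = \<rho> g ` S"

lemma NN_Fin: "NN Y e \<subseteq> Fin"
  unfolding NN_def Fin_def by auto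

lemma sd_Fin: "S \<in> Fin \<Longrightarrow> A \<in> Fin \<Longrightarrow> sd S A \<in> Fin"
  unfolding Fin_def using sd_sub by auto

lemma sep_finite_aux:
  assumes "finite P" "P \<subseteq> Y \<times> Y"
  shows "\<exists>e\<in>B. \<forall>x y. (x, y) \<in> P \<longrightarrow> x \<noteq> y \<longrightarrow> (x, y) \<notin> e"
  using assms
proof (induction P rule: finite_induct)
  case empty then show ?case using Bne by blast
next
  case (insert p P)
  then obtain e where e: "e \<in> B" "\<forall>x y. (x, y) \<in> P \<longrightarrow> x \<noteq> y \<longrightarrow> (x, y) \<notin> e" by blast
  obtain x y where p: "p = (x, y)" by fastforce
  have xy: "x \<in> Y" "y \<in> Y" using insert.prems p by auto
  show ?case
  proof (cases "x = y")
    case True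
    have "\<forall>u v. (u, v) \<in> insert p P \<longrightarrow> u \<noteq> v \<longrightarrow> (u, v) \<notin> e"
      using e(2) True p by blast
    then show ?thesis using e(1) by blast
  next
    case False
    then obtain e' where e': "e' \<in> B" "(x, y) \<notin> e'" using Bsep xy by blast
    obtain e'' where e'': "e'' \<in> B" "e'' \<subseteq> e \<inter> e'" using Bint e(1) e'(1) by blast
    have "\<forall>u v. (u, v) \<in> insert p P \<longrightarrow> u \<noteq> v \<longrightarrow> (u, v) \<notin> e''"
      using e(2) e'(2) e''(2) p by blast
    then show ?thesis using e''(1) by blast
  qed
qed

lemma sep_finite:
  assumes "finite D" "D \<subseteq> Y"
  shows "\<exists>e\<in>B. \<forall>x\<in>D. \<forall>y\<in>D. x \<noteq> y \<longrightarrow> (x, y) \<notin> e"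
proof -
  have fin: "finite (D \<times> D)" "D \<times> D \<subseteq> Y \<times> Y" using assms by auto
  obtain e where e: "e \<in> B" "\<forall>x y. (x, y) \<in> D \<times> D \<longrightarrow> x \<noteq> y \<longrightarrow> (x, y) \<notin> e"
    using sep_finite_aux[OF fin] by blast
  have "\<forall>x\<in>D. \<forall>y\<in>D. x \<noteq> y \<longrightarrow> (x, y) \<notin> e" using e(2) by blast
  thus ?thesis using e(1) by blast
qed

lemma not_NN_sep:
  assumes e: "e \<in> B" and D: "D \<subseteq> Y" "a \<in> D" and sep: "\<forall>x\<in>D. \<forall>y\<in>D. x \<noteq> y \<longrightarrow> (x, y) \<notin> e"
  shows "D \<notin> NN Y e"
proof
  assume h: "D \<in> NN Y e"
  have "D \<inter> e `` {a} = {a}"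
    using Beq[OF e] sep D unfolding equiv_def refl_on_def by auto
  thus False using h satur_class[OF Beq[OF e], of a] D unfolding NN_def by fastforce
qed

lemma istop: "istopology openE"
  unfolding istopology_def
proof (intro conjI allI impI)
  fix S T assume S: "openE S" and T: "openE T"
  show "openE (S \<inter> T)"
    unfolding openE_def
  proof (intro conjI ballI)
    show "S \<inter> T \<subseteq> Fin" using S unfolding openE_def by auto
    fix x assume "x \<in> S \<inter> T"
    then obtain e e' where "e \<in> B" "e' \<in> B" "\<forall>A\<in>NN Y e. sd x A \<in> S" "\<forall>A\<in>NN Y e'. sd x A \<in> T"
      using S T unfolding openE_def by blast
    moreover obtain e'' where "e'' \<in> B" "e'' \<subseteq> e \<inter> e'" using Bint calculation by blast
    ultimately show "\<exists>e\<in>B. \<forall>A\<in>NN Y e. sd x A \<in> S \<inter> T"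
      using NN_mono[of e'' e Y] NN_mono[of e'' e' Y] by (intro bexI[of _ e'']) auto
  qed
next
  fix K assume "\<forall>K'\<in>K. openE K'"
  thus "openE (\<Union>K)" unfolding openE_def by (auto, meson UnionI)
qed

lemma openin_TE: "openin TE U \<longleftrightarrow> openE U"
  unfolding TE_def using istop by simp

lemma topspace_TE: "topspace TE = Fin"
proof -
  have "openE Fin" unfolding openE_def using Bne NN_Fin sd_Fin by blast
  moreover have "openE U \<Longrightarrow> U \<subseteq> Fin" for U unfolding openE_def by auto
  ultimately show ?thesis unfolding topspace_def openin_TE by blast
qed

definition "coset S e = sd S ` NN Y e"

lemma openE_I:
  assumes "U \<subseteq> Fin" "\<And>S. S \<in> U \<Longrightarrow> \<exists>e\<in>B. \<forall>A\<in>NN Y e. sd S A \<in> U"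
  shows "openin TE U"
  unfolding openin_TE openE_def using assms by blast

lemma coset_open:
  assumes "S \<in> Fin" "e \<in> B" shows "openin TE (coset S e)"
proof (rule openE_I)
  show "coset S e \<subseteq> Fin" unfolding coset_def using assms NN_Fin sd_Fin by blast
  fix S' assume "S' \<in> coset S e"
  then obtain A where A: "A \<in> NN Y e" "S' = sd S A" unfolding coset_def by auto
  have "\<forall>A'\<in>NN Y e. sd S' A' \<in> coset S e"
  proof
    fix A' assume "A' \<in> NN Y e"
    hence "sd A A' \<in> NN Y e" using NN_sd A(1) by blast
    thus "sd S' A' \<in> coset S e" unfolding coset_def using A(2) by (auto simp: sd_assoc)
  qed
  thus "\<exists>e'\<in>B. \<forall>A\<in>NN Y e'. sd S' A \<in> coset S e" using assms(2) by blast
qed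

lemma coset_mem: "S \<in> coset S e"
  unfolding coset_def using NN_empty by (metis image_eqI sd_empty(2))

lemma EE_simps[simp]: "carrier EE = Fin" "mult EE = sd" "one EE = {}"
  unfolding EE_def by auto

lemma comm_EE: "comm_group EE"
proof (rule comm_groupI)
  show "x \<in> carrier EE \<Longrightarrow> \<exists>y\<in>carrier EE. y \<otimes>\<^bsub>EE\<^esub> x = \<one>\<^bsub>EE\<^esub>" for x
    by (intro bexI[of _ x]) auto
  show "x \<otimes>\<^bsub>EE\<^esub> y \<otimes>\<^bsub>EE\<^esub> z = x \<otimes>\<^bsub>EE\<^esub> (y \<otimes>\<^bsub>EE\<^esub> z)" for x y z
    by (simp add: sd_assoc)
  show "x \<otimes>\<^bsub>EE\<^esub> y = y \<otimes>\<^bsub>EE\<^esub> x" for x y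
    by (simp add: sd_comm[of x y])
  show "\<one>\<^bsub>EE\<^esub> \<in> carrier EE" by (simp add: Fin_def)
qed (auto simp: sd_Fin)

lemma group_EE: "group EE" using comm_EE comm_group.axioms(2) by blast

lemma inv_EE: "S \<in> Fin \<Longrightarrow> inv\<^bsub>EE\<^esub> S = S"
  by (rule group.inv_equality[OF group_EE]) auto

lemma bool_EE: "boolean_group EE"
  unfolding boolean_group_def using comm_EE by auto

lemma NN_open: "e \<in> B \<Longrightarrow> openin TE (NN Y e)"
  using coset_open[of "{}" e] unfolding coset_def Fin_def by simp

lemma nonarch_EE: "non_archimedean_group EE TE"
  unfolding non_archimedean_group_def
proof (intro allI impI)
  fix U assume "openin TE U \<and> \<one>\<^bsub>EE\<^esub> \<in> U"
  then obtain e where e: "e \<in> B" "\<forall>A\<in>NN Y e. A \<in> U" unfolding openin_TE openE_def by force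
  have "subgroup (NN Y e) EE"
  proof (rule subgroup.intro)
    show "x \<in> NN Y e \<Longrightarrow> inv\<^bsub>EE\<^esub> x \<in> NN Y e" for x
      using inv_EE NN_Fin by (metis subsetD)
  qed (use NN_Fin NN_sd NN_empty in auto)
  thus "\<exists>H. subgroup H EE \<and> openin TE H \<and> H \<subseteq> U" using e NN_open by blast
qed

lemma Haus_EE: "Hausdorff_space TE"
  unfolding Hausdorff_space_def topspace_TE
proof (intro allI impI)
  fix S T assume h: "S \<in> Fin \<and> T \<in> Fin \<and> S \<noteq> T"
  let ?D = "sd S T"
  have D: "finite ?D" "?D \<subseteq> Y" "?D \<noteq> {}" using h unfolding Fin_def sd_def by auto
  obtain e where e: "e \<in> B" "\<forall>x\<in>?D. \<forall>y\<in>?D. x \<noteq> y \<longrightarrow> (x, y) \<notin> e"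
    using sep_finite[OF D(1) D(2)] by blast
  have nD: "?D \<notin> NN Y e" using not_NN_sep[OF e(1) D(2) _ e(2)] D(3) by blast
  have "disjnt (coset S e) (coset T e)"
  proof (rule ccontr)
    assume "\<not> disjnt (coset S e) (coset T e)"
    then obtain A A' where "A \<in> NN Y e" "A' \<in> NN Y e" "sd S A = sd T A'"
      unfolding coset_def disjnt_def by auto
    hence "?D = sd A A'" "sd A A' \<in> NN Y e" using NN_sd sd_swap by blast+
    thus False using nD by simp
  qed
  moreover have "openin TE (coset S e)" "openin TE (coset T e)" using coset_open h e(1) by auto
  ultimately show "\<exists>U V. openin TE U \<and> openin TE V \<and> S \<in> U \<and> T \<in> V \<and> disjnt U V"
    using coset_mem[of S e] coset_mem[of T e] by blast
qed

lemma mult_cont: "continuous_map (prod_topology TE TE) TE (\<lambda>(g, h). sd g h)"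
  unfolding continuous_map_def
proof (intro conjI allI impI)
  show "(\<lambda>(g, h). sd g h) \<in> topspace (prod_topology TE TE) \<rightarrow> topspace TE"
    by (auto simp: topspace_TE sd_Fin)
  fix U assume U: "openin TE U"
  define W where "W = {x \<in> topspace (prod_topology TE TE). (case x of (g, h) \<Rightarrow> sd g h) \<in> U}"
  have "\<exists>U' V. openin TE U' \<and> openin TE V \<and> S \<in> U' \<and> T \<in> V \<and> U' \<times> V \<subseteq> W"
    if ST: "(S, T) \<in> W" for S T
  proof -
    have ST': "S \<in> Fin" "T \<in> Fin" "sd S T \<in> U" using ST unfolding W_def by (auto simp: topspace_TE)
    then obtain e where e: "e \<in> B" "\<forall>A\<in>NN Y e. sd (sd S T) A \<in> U"
      using U unfolding openin_TE openE_def by blast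
    have "coset S e \<times> coset T e \<subseteq> W"
    proof
      fix p assume "p \<in> coset S e \<times> coset T e"
      then obtain a b where ab: "a \<in> NN Y e" "b \<in> NN Y e" "p = (sd S a, sd T b)"
        unfolding coset_def by auto
      have eq: "sd (sd S a) (sd T b) = sd (sd S T) (sd a b)" unfolding sd_def by auto
      have "sd a b \<in> NN Y e" using ab NN_sd by blast
      hence "sd (sd S a) (sd T b) \<in> U" using e eq by simp
      moreover have "sd S a \<in> Fin" "sd T b \<in> Fin" using ST' ab NN_Fin sd_Fin by auto
      ultimately show "p \<in> W" using ab(3) unfolding W_def by (simp add: topspace_TE)
    qed
    moreover have "openin TE (coset S e)" "openin TE (coset T e)"
      using coset_open ST' e by auto
    ultimately show ?thesis using coset_mem[of S e] coset_mem[of T e] by blast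
  qed
  thus "openin (prod_topology TE TE) {x \<in> topspace (prod_topology TE TE). (case x of (g, h) \<Rightarrow> sd g h) \<in> U}"
    unfolding openin_prod_topology_alt W_def[symmetric] by blast
qed

lemma topgroup_EE: "topological_group EE TE"
  unfolding topological_group_def
proof (intro conjI)
  show "group EE" by (rule group_EE)
  show "topspace TE = carrier EE" by (simp add: topspace_TE)
  show "continuous_map TE TE (\<lambda>g. inv\<^bsub>EE\<^esub> g)"
    by (rule continuous_map_eq[OF continuous_map_id]) (simp add: topspace_TE inv_EE)
  show "continuous_map (prod_topology TE TE) TE (\<lambda>(g, h). g \<otimes>\<^bsub>EE\<^esub> h)"
    using mult_cont by simp
qed

lemma grp: "group G" using tg unfolding topological_group_def by auto
lemma topT: "topspace T = carrier G" using tg unfolding topological_group_def by auto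

lemma rho_Y: "g \<in> carrier G \<Longrightarrow> x \<in> Y \<Longrightarrow> \<rho> g x \<in> Y"
  using act unfolding group_action_on_def by auto

lemma rho_one: "x \<in> Y \<Longrightarrow> \<rho> \<one>\<^bsub>G\<^esub> x = x"
  using act unfolding group_action_on_def by blast

lemma rho_mult: "g \<in> carrier G \<Longrightarrow> h \<in> carrier G \<Longrightarrow> x \<in> Y \<Longrightarrow> \<rho> (g \<otimes>\<^bsub>G\<^esub> h) x = \<rho> g (\<rho> h x)"
  using act unfolding group_action_on_def by blast

lemma tau_one: "S \<in> Fin \<Longrightarrow> \<tau> \<one>\<^bsub>G\<^esub> S = S"
proof -
  assume S: "S \<in> Fin"
  have "\<rho> \<one>\<^bsub>G\<^esub> ` S = id ` S" by (rule image_cong) (use S rho_one in \<open>auto simp: Fin_def\<close>)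
  thus ?thesis unfolding \<tau>_def by simp
qed

lemma tau_mult: "g \<in> carrier G \<Longrightarrow> h \<in> carrier G \<Longrightarrow> S \<in> Fin \<Longrightarrow> \<tau> (g \<otimes>\<^bsub>G\<^esub> h) S = \<tau> g (\<tau> h S)"
proof -
  assume g: "g \<in> carrier G" and h: "h \<in> carrier G" and S: "S \<in> Fin"
  have "\<rho> (g \<otimes>\<^bsub>G\<^esub> h) ` S = (\<rho> g \<circ> \<rho> h) ` S"
    by (rule image_cong) (use S rho_mult[OF g h] in \<open>auto simp: Fin_def\<close>)
  thus ?thesis unfolding \<tau>_def by (simp add: image_comp)
qed

lemma rho_inv: "g \<in> carrier G \<Longrightarrow> x \<in> Y \<Longrightarrow> \<rho> (inv\<^bsub>G\<^esub> g) (\<rho> g x) = x"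
proof -
  assume g: "g \<in> carrier G" and x: "x \<in> Y"
  have "\<rho> (inv\<^bsub>G\<^esub> g) (\<rho> g x) = \<rho> (inv\<^bsub>G\<^esub> g \<otimes>\<^bsub>G\<^esub> g) x"
    using act g x group.inv_closed[OF grp g] unfolding group_action_on_def by auto
  also have "\<dots> = x" using act g x group.l_inv[OF grp g] unfolding group_action_on_def by auto
  finally show ?thesis .
qed

lemma rho_inj: "g \<in> carrier G \<Longrightarrow> inj_on (\<rho> g) Y"
proof (rule inj_onI)
  fix x y assume g: "g \<in> carrier G" and xy: "x \<in> Y" "y \<in> Y" "\<rho> g x = \<rho> g y"
  have "x = \<rho> (inv\<^bsub>G\<^esub> g) (\<rho> g x)" using rho_inv[OF g xy(1)] by simp
  also have "\<dots> = \<rho> (inv\<^bsub>G\<^esub> g) (\<rho> g y)" using xy(3) by simp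
  also have "\<dots> = y" using rho_inv[OF g xy(2)] .
  finally show "x = y" .
qed

lemma tau_Fin: "g \<in> carrier G \<Longrightarrow> S \<in> Fin \<Longrightarrow> \<tau> g S \<in> Fin"
  unfolding Fin_def \<tau>_def using rho_Y by auto

lemma tau_sd:
  assumes g: "g \<in> carrier G" and S: "S \<subseteq> Y" and A: "A \<subseteq> Y"
  shows "\<tau> g (sd S A) = sd (\<tau> g S) (\<tau> g A)"
proof -
  have i: "inj_on (\<rho> g) Y" using rho_inj[OF g] .
  have 1: "\<rho> g ` (S - A) = \<rho> g ` S - \<rho> g ` A"
    by (rule inj_on_image_set_diff[OF i]) (use S A in auto)
  have 2: "\<rho> g ` (A - S) = \<rho> g ` A - \<rho> g ` S"
    by (rule inj_on_image_set_diff[OF i]) (use S A in auto)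
  show ?thesis unfolding \<tau>_def sd_def image_Un 1 2 ..
qed

lemma part1:
  assumes g: "g \<in> carrier G" "g0 \<in> carrier G" and S0: "S0 \<in> Fin" and e: "e \<in> B"
    and cl: "\<forall>x\<in>S0. (\<rho> g x, \<rho> g0 x) \<in> e"
  shows "sd (\<tau> g S0) (\<tau> g0 S0) \<in> NN Y e"
proof -
  have fin: "\<tau> g S0 \<in> Fin" "\<tau> g0 S0 \<in> Fin" using tau_Fin g S0 by auto
  have S0Y: "S0 \<subseteq> Y" using S0 unfolding Fin_def by auto
  have symm: "\<And>u v. (u, v) \<in> e \<Longrightarrow> (v, u) \<in> e"
    using Beq[OF e] unfolding equiv_def sym_def by blast
  { fix C assume C: "satur Y e C"
    have Cs: "\<And>u v. (u, v) \<in> e \<Longrightarrow> u \<in> C \<Longrightarrow> v \<in> C" using C unfolding satur_def by blast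
    define P where "P = {x\<in>S0. \<rho> g x \<in> C}"
    have iff: "\<rho> g x \<in> C \<longleftrightarrow> \<rho> g0 x \<in> C" if xS: "x \<in> S0" for x
    proof -
      have p: "(\<rho> g x, \<rho> g0 x) \<in> e" using cl xS by blast
      have q: "(\<rho> g0 x, \<rho> g x) \<in> e" using symm[OF p] .
      show ?thesis using Cs[OF p] Cs[OF q] by blast
    qed
    have P: "P = {x\<in>S0. \<rho> g0 x \<in> C}" unfolding P_def using iff by blast
    have PS: "P \<subseteq> Y" using S0Y unfolding P_def by auto
    have PS': "{x\<in>S0. \<rho> g0 x \<in> C} \<subseteq> Y" using S0Y by auto
    have "\<tau> g S0 \<inter> C = \<rho> g ` P" unfolding \<tau>_def P_def by auto
    hence c1: "card (\<tau> g S0 \<inter> C) = card P"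
      using card_image[OF inj_on_subset[OF rho_inj[OF g(1)] PS]] by simp
    have "\<tau> g0 S0 \<inter> C = \<rho> g0 ` {x\<in>S0. \<rho> g0 x \<in> C}" unfolding \<tau>_def by auto
    hence c2: "card (\<tau> g0 S0 \<inter> C) = card P"
      unfolding P using card_image[OF inj_on_subset[OF rho_inj[OF g(2)] PS']] by simp
    have f1: "finite (\<tau> g S0 \<inter> C)" "finite (\<tau> g0 S0 \<inter> C)" using fin unfolding Fin_def by auto
    have "even (card (sd (\<tau> g S0) (\<tau> g0 S0) \<inter> C))"
      unfolding sd_Int using even_sd[OF f1] c1 c2 by simp }
  moreover have "sd (\<tau> g S0) (\<tau> g0 S0) \<in> Fin" using fin sd_Fin by blast
  ultimately show ?thesis unfolding NN_def Fin_def by blast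
qed

lemma part2:
  assumes g: "g \<in> carrier G" and d: "\<forall>x y. (x, y) \<in> d \<longrightarrow> (\<rho> g x, \<rho> g y) \<in> e"
    and dB: "d \<in> B" and A: "A \<in> NN Y d"
  shows "\<tau> g A \<in> NN Y e"
proof -
  have AF: "A \<in> Fin" using A NN_Fin by auto
  have AY: "A \<subseteq> Y" using AF unfolding Fin_def by auto
  have dY: "\<And>x y. (x, y) \<in> d \<Longrightarrow> y \<in> Y" using Beq[OF dB] unfolding equiv_def refl_on_def by blast
  { fix C assume C: "satur Y e C"
    have Cs: "\<And>u v. (u, v) \<in> e \<Longrightarrow> u \<in> C \<Longrightarrow> v \<in> C" using C unfolding satur_def by blast
    define C' where "C' = {x\<in>Y. \<rho> g x \<in> C}"
    have sat: "satur Y d C'"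
      unfolding satur_def C'_def
    proof (intro conjI allI impI)
      fix x y assume xy: "(x, y) \<in> d" "x \<in> {x \<in> Y. \<rho> g x \<in> C}"
      show "y \<in> {x \<in> Y. \<rho> g x \<in> C}" using dY[OF xy(1)] Cs[OF d[rule_format, OF xy(1)]] xy(2) by simp
    qed auto
    have sub: "A \<inter> C' \<subseteq> Y" using AY by auto
    have "\<tau> g A \<inter> C = \<rho> g ` (A \<inter> C')" using AY unfolding \<tau>_def C'_def by auto
    hence "card (\<tau> g A \<inter> C) = card (A \<inter> C')"
      using card_image[OF inj_on_subset[OF rho_inj[OF g] sub]] by simp
    hence "even (card (\<tau> g A \<inter> C))" using A sat unfolding NN_def by auto }
  thus ?thesis using tau_Fin[OF g AF] unfolding NN_def Fin_def by auto
qed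

lemma contact_EE: "continuous_action G T TE \<tau>"
  unfolding continuous_action_def
proof (intro conjI)
  show "group_action_on G (topspace TE) \<tau>"
    unfolding group_action_on_def topspace_TE
  proof (intro conjI ballI)
    show "\<tau> g x \<in> Fin" if "g \<in> carrier G" "x \<in> Fin" for g x using tau_Fin that by auto
    show "\<tau> \<one>\<^bsub>G\<^esub> x = x" if "x \<in> Fin" for x
      using tau_one that by blast
    show "\<tau> (g \<otimes>\<^bsub>G\<^esub> h) x = \<tau> g (\<tau> h x)" if "g \<in> carrier G" "h \<in> carrier G" "x \<in> Fin" for g h x
      using tau_mult that by blast
  qed
  show "continuous_map (prod_topology T TE) TE (\<lambda>(g, x). \<tau> g x)"
    unfolding continuous_map_def
  proof (intro conjI allI impI)
    show "(\<lambda>(g, x). \<tau> g x) \<in> topspace (prod_topology T TE) \<rightarrow> topspace TE"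
      by (auto simp: topspace_TE topT tau_Fin)
    fix U assume U: "openin TE U"
    let ?W = "{x \<in> topspace (prod_topology T TE). (case x of (g, S) \<Rightarrow> \<tau> g S) \<in> U}"
    show "openin (prod_topology T TE) ?W"
      unfolding openin_prod_topology_alt
    proof (intro allI impI)
      fix g0 S0 assume h: "(g0, S0) \<in> ?W"
      hence h': "g0 \<in> carrier G" "S0 \<in> Fin" "\<tau> g0 S0 \<in> U" by (auto simp: topspace_TE topT)
      then obtain e where e: "e \<in> B" "\<forall>A\<in>NN Y e. sd (\<tau> g0 S0) A \<in> U"
        using U unfolding openin_TE openE_def by blast
      obtain d V1 where dV1: "d \<in> B" "openin T V1" "g0 \<in> V1"
        "\<forall>g\<in>V1. \<forall>x y. (x, y) \<in> d \<longrightarrow> (\<rho> g x, \<rho> g y) \<in> e"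
        using cont2[OF e(1) h'(1)] by blast
      have "\<forall>x\<in>S0. \<exists>V. openin T V \<and> g0 \<in> V \<and> (\<forall>g\<in>V. (\<rho> g x, \<rho> g0 x) \<in> e)"
        using cont1[OF e(1) h'(1)] h'(2) unfolding Fin_def by blast
      moreover have "finite S0" using h'(2) unfolding Fin_def by auto
      moreover have "g0 \<in> topspace T" using h'(1) topT by simp
      ultimately obtain V2 where V2: "openin T V2" "g0 \<in> V2" "\<forall>g\<in>V2. \<forall>x\<in>S0. (\<rho> g x, \<rho> g0 x) \<in> e"
        using finite_open_nbhd[of S0 g0 T "\<lambda>g x. (\<rho> g x, \<rho> g0 x) \<in> e"] by blast
      have sub: "(V1 \<inter> V2) \<times> coset S0 d \<subseteq> ?W"
      proof
        fix p assume "p \<in> (V1 \<inter> V2) \<times> coset S0 d"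
        then obtain g A where p: "p = (g, sd S0 A)" "g \<in> V1" "g \<in> V2" "A \<in> NN Y d"
          unfolding coset_def by auto
        have gG: "g \<in> carrier G" using p(2) dV1(2) openin_subset topT by blast
        have AF: "A \<in> Fin" using p NN_Fin by auto
        have "\<tau> g (sd S0 A) = sd (\<tau> g0 S0) (sd (sd (\<tau> g S0) (\<tau> g0 S0)) (\<tau> g A))"
          using tau_sd[OF gG, of S0 A] h'(2) AF sd_id[of "\<tau> g S0" "\<tau> g A" "\<tau> g0 S0"] unfolding Fin_def by simp
        moreover have "sd (sd (\<tau> g S0) (\<tau> g0 S0)) (\<tau> g A) \<in> NN Y e"
        proof (rule NN_sd)
          show "sd (\<tau> g S0) (\<tau> g0 S0) \<in> NN Y e"
            using part1[OF gG h'(1) h'(2) e(1)] V2(3) p(3) by blast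
          show "\<tau> g A \<in> NN Y e"
            using part2[OF gG _ dV1(1) p(4)] dV1(4) p(2) by blast
        qed
        ultimately have "\<tau> g (sd S0 A) \<in> U" using e by simp
        moreover have "sd S0 A \<in> Fin" using sd_Fin h' AF by auto
        ultimately show "p \<in> ?W" using p gG by (simp add: topspace_TE topT)
      qed
      show "\<exists>U V. openin T U \<and> openin TE V \<and> g0 \<in> U \<and> S0 \<in> V \<and> U \<times> V \<subseteq> ?W"
      proof (intro exI conjI)
        show "openin T (V1 \<inter> V2)" using dV1(2) V2(1) by blast
        show "g0 \<in> V1 \<inter> V2" using dV1(3) V2(2) by blast
      qed (use sub coset_open[OF h'(2) dV1(1)] coset_mem[of S0 d] in auto)
    qed
  qed
qed

lemma iso_EE: "g \<in> carrier G \<Longrightarrow> \<tau> g \<in> iso EE EE"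
proof -
  assume g: "g \<in> carrier G"
  have ig: "inv\<^bsub>G\<^esub> g \<in> carrier G" using group.inv_closed[OF grp g] .
  have hom: "\<tau> g \<in> hom EE EE"
    unfolding hom_def using tau_Fin[OF g] tau_sd[OF g] by (auto simp: Fin_def)
  have bk: "\<tau> (inv\<^bsub>G\<^esub> g) (\<tau> g S) = S" if "S \<in> Fin" for S
    using tau_mult[OF ig g that] tau_one[OF that] group.l_inv[OF grp g] by simp
  have inv2: "inv\<^bsub>G\<^esub> (inv\<^bsub>G\<^esub> g) = g" using group.inv_inv[OF grp g] .
  have fwd: "\<tau> g (\<tau> (inv\<^bsub>G\<^esub> g) S) = S" if "S \<in> Fin" for S
    using tau_mult[OF g ig that] tau_one[OF that] group.r_inv[OF grp g] by simp
  have "bij_betw (\<tau> g) Fin Fin"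
    by (rule bij_betw_byWitness[of _ "\<tau> (inv\<^bsub>G\<^esub> g)"]) (use bk fwd tau_Fin g ig in auto)
  thus ?thesis using hom unfolding iso_def by auto
qed

lemma equivar: "g \<in> carrier G \<Longrightarrow> x \<in> Y \<Longrightarrow> \<tau> g {x} = {\<rho> g x}"
  unfolding \<tau>_def by auto

lemma closed_sing: "closedin TE ((\<lambda>y. {y}) ` Y)"
  unfolding closedin_def topspace_TE openin_TE
proof (intro conjI)
  show "(\<lambda>y. {y}) ` Y \<subseteq> Fin" unfolding Fin_def by auto
  show "openE (Fin - (\<lambda>y. {y}) ` Y)"
    unfolding openE_def
  proof (intro conjI ballI)
    show "Fin - (\<lambda>y. {y}) ` Y \<subseteq> Fin" by auto
    fix S assume S: "S \<in> Fin - (\<lambda>y. {y}) ` Y"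
    have SF: "finite S" "S \<subseteq> Y" using S unfolding Fin_def by auto
    obtain e where e: "e \<in> B" "\<forall>x\<in>S. \<forall>y\<in>S. x \<noteq> y \<longrightarrow> (x, y) \<notin> e"
      using sep_finite[OF SF] by blast
    have eq: "equiv Y e" using Beq e(1) .
    have "sd S A \<in> Fin - (\<lambda>y. {y}) ` Y" if A: "A \<in> NN Y e" for A
    proof -
      have "sd S A \<in> Fin" using S A NN_Fin sd_Fin by auto
      moreover have "sd S A \<notin> (\<lambda>y. {y}) ` Y"
      proof
        assume "sd S A \<in> (\<lambda>y. {y}) ` Y"
        then obtain z where z: "z \<in> Y" "sd S A = {z}" by auto
        hence Aeq: "A = sd S {z}" using sd_cancel by metis
        show False
        proof (cases "S = {}")
          case True
          hence "A = {z}" using Aeq by simp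
          thus False using not_NN_sep[OF e(1), of "{z}" z] A z by auto
        next
          case False
          then obtain a where a: "a \<in> S" by auto
          have aY: "a \<in> Y" using SF(2) a by blast
          have Snot: "S \<notin> (\<lambda>y. {y}) ` Y"
          proof
            assume h: "S \<in> (\<lambda>y. {y}) ` Y"
            show False by (rule DiffD2[OF S h])
          qed
          have Sa: "S \<noteq> {a}"
          proof
            assume Sa': "S = {a}"
            have "{a} \<in> (\<lambda>y. {y}) ` Y" by (rule imageI[OF aY])
            hence "S \<in> (\<lambda>y. {y}) ` Y" by (subst Sa')
            with Snot show False by contradiction
          qed
          have "\<exists>b\<in>S. b \<noteq> a"
          proof (rule ccontr)
            assume nb: "\<not> (\<exists>b\<in>S. b \<noteq> a)"
            have "S \<subseteq> {a}"
            proof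
              fix x assume "x \<in> S" thus "x \<in> {a}" using nb by blast
            qed
            moreover have "{a} \<subseteq> S" using a by blast
            ultimately have "S = {a}" by (rule equalityI)
            thus False using Sa by contradiction
          qed
          then obtain b where b: "b \<in> S" "b \<noteq> a" by (rule bexE)
          have ab: "(a, b) \<notin> e" using e(2) a b by auto
          have symm: "\<And>u v. (u, v) \<in> e \<Longrightarrow> (v, u) \<in> e" using eq unfolding equiv_def sym_def by blast
          have trns: "\<And>u v w. (u, v) \<in> e \<Longrightarrow> (v, w) \<in> e \<Longrightarrow> (u, w) \<in> e"
            using eq unfolding equiv_def trans_def by blast
          have rfl: "\<And>u. u \<in> Y \<Longrightarrow> (u, u) \<in> e" using eq unfolding equiv_def refl_on_def by blast
          have "\<exists>c. c \<in> S \<and> (c, z) \<notin> e"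
          proof (cases "(a, z) \<in> e")
            case True
            have "(b, z) \<notin> e"
            proof
              assume "(b, z) \<in> e"
              hence "(a, b) \<in> e" using trns[OF True symm] by blast
              thus False using ab by contradiction
            qed
            thus ?thesis using b(1) by blast
          next
            case False
            thus ?thesis using a by blast
          qed
          then obtain c where c: "c \<in> S" "(c, z) \<notin> e" by blast
          have cY: "c \<in> Y" using SF(2) c(1) by blast
          have C1: "S \<inter> e `` {c} = {c}"
          proof (rule equalityI)
            show "S \<inter> e `` {c} \<subseteq> {c}"
            proof
              fix x assume x: "x \<in> S \<inter> e `` {c}"
              hence "(c, x) \<in> e" "x \<in> S" by auto
              thus "x \<in> {c}" using e(2) c(1) by auto
            qed
            show "{c} \<subseteq> S \<inter> e `` {c}" using c(1) rfl[OF cY] by blast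
          qed
          have C2: "{z} \<inter> e `` {c} = {}" using c(2) by blast
          have AC: "A \<inter> e `` {c} = {c}" unfolding Aeq sd_Int C1 C2 by simp
          have "even (card (A \<inter> e `` {c}))"
            using A satur_class[OF eq cY] unfolding NN_def by blast
          thus False unfolding AC by simp
        qed
      qed
      ultimately show ?thesis by simp
    qed
    thus "\<exists>e\<in>B. \<forall>A\<in>NN Y e. sd S A \<in> Fin - (\<lambda>y. {y}) ` Y" using e(1) by blast
  qed
qed

lemma U1:
  assumes "openin TE U" "{} \<in> U"
  shows "\<exists>e\<in>B. \<forall>x y. (x, y) \<in> e \<longrightarrow> sd {y} {x} \<in> U"
proof -
  obtain e where e: "e \<in> B" "\<forall>A\<in>NN Y e. sd {} A \<in> U"
    using assms unfolding openin_TE openE_def by blast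
  thus ?thesis using pair_in_NN Beq by (metis sd_empty(1))
qed

lemma U2:
  assumes "e \<in> B"
  shows "\<exists>U. openin TE U \<and> {} \<in> U \<and> (\<forall>x\<in>Y. \<forall>y\<in>Y. sd {y} {x} \<in> U \<longrightarrow> (x, y) \<in> e)"
  using NN_open[OF assms] NN_empty pair_NN_iff[OF Beq[OF assms]] by blast

end

definition lift :: "('x \<times> 'x) set \<Rightarrow> ('x set \<times> 'x set) set" where
  "lift e = {(s, t). \<exists>a b. s = {a} \<and> t = {b} \<and> (a, b) \<in> e}"

lemma lift_mem[simp]: "({a}, {b}) \<in> lift e \<longleftrightarrow> (a, b) \<in> e"
  unfolding lift_def by auto

lemma equiv_lift: "equiv X e \<Longrightarrow> equiv ((\<lambda>x. {x}) ` X) (lift e)"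
  unfolding equiv_def refl_on_def sym_def trans_def lift_def by blast

lemma lift_mono: "e \<subseteq> e' \<Longrightarrow> lift e \<subseteq> lift e'"
  unfolding lift_def by blast

lemma unif_ne: "uniformity_on X \<mu> \<Longrightarrow> \<mu> \<noteq> {}"
  unfolding uniformity_on_def by (elim conjE)
lemma unif_sub: "uniformity_on X \<mu> \<Longrightarrow> \<epsilon> \<in> \<mu> \<Longrightarrow> \<epsilon> \<subseteq> X \<times> X"
  unfolding uniformity_on_def by (drule conjunct2, drule conjunct1) blast
lemma unif_int: "uniformity_on X \<mu> \<Longrightarrow> \<epsilon> \<in> \<mu> \<Longrightarrow> \<delta> \<in> \<mu> \<Longrightarrow> \<epsilon> \<inter> \<delta> \<in> \<mu>"
  unfolding uniformity_on_def by (drule conjunct2, drule conjunct2, drule conjunct2, drule conjunct1) blast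

lemma ut_istop:
  assumes "uniformity_on X \<mu>"
  shows "istopology (\<lambda>U. U \<subseteq> X \<and> (\<forall>x\<in>U. \<exists>\<epsilon>\<in>\<mu>. \<epsilon> `` {x} \<subseteq> U))"
proof -
  have I: "S \<inter> T \<subseteq> X \<and> (\<forall>x\<in>S \<inter> T. \<exists>\<epsilon>\<in>\<mu>. \<epsilon> `` {x} \<subseteq> S \<inter> T)"
    if S: "S \<subseteq> X \<and> (\<forall>x\<in>S. \<exists>\<epsilon>\<in>\<mu>. \<epsilon> `` {x} \<subseteq> S)"
    and T: "T \<subseteq> X \<and> (\<forall>x\<in>T. \<exists>\<epsilon>\<in>\<mu>. \<epsilon> `` {x} \<subseteq> T)" for S T
  proof -
    have "\<exists>\<epsilon>\<in>\<mu>. \<epsilon> `` {x} \<subseteq> S \<inter> T" if x: "x \<in> S \<inter> T" for x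
    proof -
      obtain a where a: "a \<in> \<mu>" "a `` {x} \<subseteq> S" using S x by blast
      obtain b where b: "b \<in> \<mu>" "b `` {x} \<subseteq> T" using T x by blast
      have "a \<inter> b \<in> \<mu>" using unif_int[OF assms a(1) b(1)] .
      moreover have "(a \<inter> b) `` {x} \<subseteq> S \<inter> T" using a(2) b(2) by blast
      ultimately show ?thesis by blast
    qed
    thus ?thesis using S by blast
  qed
  have U: "\<Union>K \<subseteq> X \<and> (\<forall>x\<in>\<Union>K. \<exists>\<epsilon>\<in>\<mu>. \<epsilon> `` {x} \<subseteq> \<Union>K)"
    if K: "\<forall>K'\<in>K. K' \<subseteq> X \<and> (\<forall>x\<in>K'. \<exists>\<epsilon>\<in>\<mu>. \<epsilon> `` {x} \<subseteq> K')" for K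
  proof -
    have "\<exists>\<epsilon>\<in>\<mu>. \<epsilon> `` {x} \<subseteq> \<Union>K" if x: "x \<in> \<Union>K" for x
    proof -
      obtain K' where K': "K' \<in> K" "x \<in> K'" using x by blast
      obtain a where "a \<in> \<mu>" "a `` {x} \<subseteq> K'" using K K' by blast
      thus ?thesis using K'(1) by blast
    qed
    thus ?thesis using K by blast
  qed
  show ?thesis unfolding istopology_def using I U by blast
qed

lemma ut_open:
  assumes "uniformity_on X \<mu>"
  shows "openin (uniform_topology X \<mu>) U \<longleftrightarrow> U \<subseteq> X \<and> (\<forall>x\<in>U. \<exists>\<epsilon>\<in>\<mu>. \<epsilon> `` {x} \<subseteq> U)"
  unfolding uniform_topology_def using ut_istop[OF assms] by simp

lemma ut_topspace:
  assumes "uniformity_on X \<mu>"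
  shows "topspace (uniform_topology X \<mu>) = X"
proof -
  obtain \<epsilon> where ep0: "\<epsilon> \<in> \<mu>" using unif_ne[OF assms] by blast
  have ep: "\<epsilon> \<in> \<mu>" "\<epsilon> \<subseteq> X \<times> X" using ep0 unif_sub[OF assms ep0] by auto
  have "\<epsilon> `` {x} \<subseteq> X" for x using ep(2) by auto
  hence "openin (uniform_topology X \<mu>) X" unfolding ut_open[OF assms] using ep(1) by blast
  hence 1: "X \<subseteq> topspace (uniform_topology X \<mu>)" by (rule openin_subset)
  have 2: "topspace (uniform_topology X \<mu>) \<subseteq> X"
    using openin_topspace[of "uniform_topology X \<mu>"] unfolding ut_open[OF assms] by (rule conjunct1)
  show ?thesis using 1 2 by (rule equalityI[rotated])
qed

theorem theorem6p5:
  fixes G :: "('g, 'm) monoid_scheme" and T :: "'g topology"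
    and X :: "'x set" and \<mu> :: "('x \<times> 'x) set set" and \<pi> :: "'g \<Rightarrow> 'x \<Rightarrow> 'x"
  assumes "topological_group G T"
    and "uniformity_on X \<mu>"
    and "hausdorff_uniformity X \<mu>"
    and "non_archimedean_uniformity X \<mu>"
    and "continuous_action G T (uniform_topology X \<mu>) \<pi>"
    and "pi_uniform G T X \<mu> \<pi>"
  shows "\<exists>(E :: 'x set set monoid) (TE :: 'x set set topology)
            (\<tau> :: 'g \<Rightarrow> 'x set set \<Rightarrow> 'x set set) (\<alpha> :: 'x \<Rightarrow> 'x set set).
           topological_group E TE \<and> boolean_group E \<and>
           Hausdorff_space TE \<and> non_archimedean_group E TE \<and>
           continuous_action G T TE \<tau> \<and>
           (\<forall>g\<in>carrier G. \<tau> g \<in> iso E E) \<and>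
           (\<forall>g\<in>carrier G. \<forall>x\<in>X. \<alpha> (\<pi> g x) = \<tau> g (\<alpha> x)) \<and>
           uniform_embedding X \<mu> (carrier E) (right_group_uniformity E TE) \<alpha> \<and>
           closedin TE (\<alpha> ` X)"
proof -
  note tg = assms(1) and un = assms(2) and hs = assms(3) and na = assms(4)
  let ?UT = "uniform_topology X \<mu>"
  have ga: "group_action_on G X \<pi>"
    and cm: "continuous_map (prod_topology T ?UT) ?UT (\<lambda>(g, x). \<pi> g x)"
    using assms(5) ut_topspace[OF un] unfolding continuous_action_def by auto
  have topT: "topspace T = carrier G" using tg unfolding topological_group_def by auto
  define Y where "Y = (\<lambda>x. {x}) ` X"
  define BB where "BB = lift ` {e \<in> \<mu>. equiv X e}"
  define \<rho> where "\<rho> = (\<lambda>g (s::'x set). \<pi> g ` s)"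
  have rho_sing[simp]: "\<rho> g {x} = {\<pi> g x}" for g x unfolding \<rho>_def by simp
  have nab: "\<exists>e\<in>\<mu>. e \<subseteq> \<epsilon> \<and> equiv X e" if "\<epsilon> \<in> \<mu>" for \<epsilon>
    using na that unfolding non_archimedean_uniformity_def by blast
  interpret core G T Y BB \<rho>
  proof
    show "topological_group G T" by (rule tg)
    show "BB \<noteq> {}"
    proof -
      obtain \<epsilon> where "\<epsilon> \<in> \<mu>" using unif_ne[OF un] by blast
      then obtain e where "e \<in> \<mu>" "equiv X e" using nab by blast
      thus ?thesis unfolding BB_def by blast
    qed
    show "equiv Y e" if "e \<in> BB" for e using that equiv_lift by (auto simp: BB_def Y_def)
    show "\<exists>e''\<in>BB. e'' \<subseteq> e \<inter> e'" if "e \<in> BB" "e' \<in> BB" for e e'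
    proof -
      have "e \<in> lift ` {e \<in> \<mu>. equiv X e}" using that(1) BB_def by simp
      then obtain a where a: "e = lift a" "a \<in> {e \<in> \<mu>. equiv X e}" by (rule imageE)
      have "e' \<in> lift ` {e \<in> \<mu>. equiv X e}" using that(2) BB_def by simp
      then obtain b where b: "e' = lift b" "b \<in> {e \<in> \<mu>. equiv X e}" by (rule imageE)
      have ab: "a \<in> \<mu>" "b \<in> \<mu>" "e = lift a" "e' = lift b" using a b by auto
      have "a \<inter> b \<in> \<mu>" using unif_int[OF un ab(1) ab(2)] .
      then obtain c where "c \<in> \<mu>" "c \<subseteq> a \<inter> b" "equiv X c" using nab by blast
      thus ?thesis using ab lift_mono[of c a] lift_mono[of c b] unfolding BB_def by blast
    qed
    show "\<exists>e\<in>BB. (x, y) \<notin> e" if "x \<in> Y" "y \<in> Y" "x \<noteq> y" for x y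
    proof -
      have "x \<in> (\<lambda>x. {x}) ` X" using that(1) Y_def by simp
      then obtain a where a: "x = {a}" "a \<in> X" by (rule imageE)
      have "y \<in> (\<lambda>x. {x}) ` X" using that(2) Y_def by simp
      then obtain b where b: "y = {b}" "b \<in> X" by (rule imageE)
      have ab: "a \<in> X" "b \<in> X" "x = {a}" "y = {b}" "a \<noteq> b" using a b that(3) by auto
      then obtain \<epsilon> where "\<epsilon> \<in> \<mu>" "(a, b) \<notin> \<epsilon>" using hs unfolding hausdorff_uniformity_def by blast
      then obtain c where "c \<in> \<mu>" "c \<subseteq> \<epsilon>" "equiv X c" using nab by blast
      thus ?thesis using ab \<open>(a, b) \<notin> \<epsilon>\<close> unfolding BB_def by (intro bexI[of _ "lift c"]) auto
    qed
    show "group_action_on G Y \<rho>"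
      using ga unfolding group_action_on_def Y_def by auto
    show "\<exists>V. openin T V \<and> g0 \<in> V \<and> (\<forall>g\<in>V. (\<rho> g x, \<rho> g0 x) \<in> e)"
      if H: "e \<in> BB" "g0 \<in> carrier G" "x \<in> Y" for e g0 x
    proof -
      have "e \<in> lift ` {e \<in> \<mu>. equiv X e}" using H(1) BB_def by simp
      then obtain c0 where c0: "e = lift c0" "c0 \<in> {e \<in> \<mu>. equiv X e}" by (rule imageE)
      obtain c where c: "c \<in> \<mu>" "equiv X c" "e = lift c" using c0 by blast
      have "x \<in> (\<lambda>x. {x}) ` X" using H(3) Y_def by simp
      then obtain a0 where a0: "x = {a0}" "a0 \<in> X" by (rule imageE)
      obtain a where a: "a \<in> X" "x = {a}" using a0 by blast
      have pr: "continuous_map T (prod_topology T ?UT) (\<lambda>g. (g, a))"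
        using a ut_topspace[OF un] by (intro continuous_map_pairedI) auto
      have cg: "continuous_map T ?UT (\<lambda>g. \<pi> g a)"
        using continuous_map_compose[OF pr cm] by (simp add: o_def)
      let ?O = "c `` {\<pi> g0 a}"
      have pa: "\<pi> g0 a \<in> X" using ga H a unfolding group_action_on_def by auto
      have "openin ?UT ?O" unfolding ut_open[OF un]
      proof (intro conjI ballI)
        show "?O \<subseteq> X" using c unfolding equiv_def refl_on_def by auto
        fix z assume "z \<in> ?O"
        hence "c `` {z} \<subseteq> ?O" using c unfolding equiv_def trans_def by blast
        thus "\<exists>\<epsilon>\<in>\<mu>. \<epsilon> `` {z} \<subseteq> ?O" using c by blast
      qed
      hence op: "openin T {g \<in> topspace T. \<pi> g a \<in> ?O}" using cg unfolding continuous_map_def by blast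
      have "g0 \<in> {g \<in> topspace T. \<pi> g a \<in> ?O}"
        using H topT pa c unfolding equiv_def refl_on_def by auto
      moreover have "\<forall>g\<in>{g \<in> topspace T. \<pi> g a \<in> ?O}. (\<rho> g x, \<rho> g0 x) \<in> e"
        using c a unfolding equiv_def sym_def by auto
      ultimately show ?thesis using op by blast
    qed
    show "\<exists>d\<in>BB. \<exists>V. openin T V \<and> g0 \<in> V \<and> (\<forall>g\<in>V. \<forall>x y. (x, y) \<in> d \<longrightarrow> (\<rho> g x, \<rho> g y) \<in> e)"
      if H: "e \<in> BB" "g0 \<in> carrier G" for e g0
    proof -
      have "e \<in> lift ` {e \<in> \<mu>. equiv X e}" using H(1) BB_def by simp
      then obtain c0 where c0: "e = lift c0" "c0 \<in> {e \<in> \<mu>. equiv X e}" by (rule imageE)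
      obtain c where c: "c \<in> \<mu>" "equiv X c" "e = lift c" using c0 by blast
      obtain \<delta> V where dV: "\<delta> \<in> \<mu>" "openin T V" "g0 \<in> V" "\<forall>(x, y)\<in>\<delta>. \<forall>g\<in>V. (\<pi> g x, \<pi> g y) \<in> c"
        using assms(6) c H unfolding pi_uniform_def by meson
      obtain d where d: "d \<in> \<mu>" "d \<subseteq> \<delta>" "equiv X d" using nab dV by blast
      have "\<forall>g\<in>V. \<forall>x y. (x, y) \<in> lift d \<longrightarrow> (\<rho> g x, \<rho> g y) \<in> e"
      proof (intro ballI allI impI)
        fix g x y assume g: "g \<in> V" and xy: "(x, y) \<in> lift d"
        then obtain a b where ab: "x = {a}" "y = {b}" "(a, b) \<in> d" unfolding lift_def by blast
        have "(a, b) \<in> \<delta>" using ab(3) d(2) by blast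
        hence "(\<pi> g a, \<pi> g b) \<in> c" using dV(4) g by blast
        thus "(\<rho> g x, \<rho> g y) \<in> e" using ab c(3) by simp
      qed
      thus ?thesis using d dV unfolding BB_def by blast
    qed
  qed
  define \<alpha> where "\<alpha> = (\<lambda>x::'x. {{x}})"
  have alphaX: "\<alpha> ` X = (\<lambda>y. {y}) ` Y" unfolding \<alpha>_def Y_def by auto
  have rgu: "right_group_uniformity EE TE =
     {\<epsilon>. \<epsilon> \<subseteq> Fin \<times> Fin \<and> (\<exists>U. openin TE U \<and> {} \<in> U \<and>
          {(x, y). x \<in> Fin \<and> y \<in> Fin \<and> sd y x \<in> U} \<subseteq> \<epsilon>)}"
    unfolding right_group_uniformity_def by (simp add: inv_EE cong: conj_cong)
  have ue: "uniform_embedding X \<mu> (carrier EE) (right_group_uniformity EE TE) \<alpha>"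
    unfolding uniform_embedding_def
  proof (intro conjI)
    show "inj_on \<alpha> X" unfolding \<alpha>_def inj_on_def by auto
    have "\<alpha> ` X \<subseteq> Fin" unfolding \<alpha>_def Fin_def by (auto simp: Y_def)
    thus "\<alpha> ` X \<subseteq> carrier EE" by simp
    show "uniformly_continuous_map X \<mu> (right_group_uniformity EE TE) \<alpha>"
      unfolding uniformly_continuous_map_def
    proof
      fix \<epsilon> assume "\<epsilon> \<in> right_group_uniformity EE TE"
      then obtain U where U: "openin TE U" "{} \<in> U" "{(x, y). x \<in> Fin \<and> y \<in> Fin \<and> sd y x \<in> U} \<subseteq> \<epsilon>"
        unfolding rgu by blast
      obtain e' where e': "e' \<in> BB" "\<forall>x y. (x, y) \<in> e' \<longrightarrow> sd {y} {x} \<in> U" using U1[OF U(1,2)] by blast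
      have "e' \<in> lift ` {e \<in> \<mu>. equiv X e}" using e'(1) BB_def by simp
      then obtain c0 where c0: "e' = lift c0" "c0 \<in> {e \<in> \<mu>. equiv X e}" by (rule imageE)
      have c: "c0 \<in> \<mu>" "e' = lift c0" using c0 by auto
      have "\<forall>x\<in>X. \<forall>y\<in>X. (x, y) \<in> c0 \<longrightarrow> (\<alpha> x, \<alpha> y) \<in> \<epsilon>"
      proof (intro ballI impI)
        fix x y assume x: "x \<in> X" and y: "y \<in> X" and xy: "(x, y) \<in> c0"
        have "({x}, {y}) \<in> e'" using xy c(2) by simp
        hence "sd {{y}} {{x}} \<in> U" using e'(2) by blast
        moreover have "{{x}} \<in> Fin" "{{y}} \<in> Fin" unfolding Fin_def using x y by (auto simp: Y_def)
        ultimately have "({{x}}, {{y}}) \<in> {(x, y). x \<in> Fin \<and> y \<in> Fin \<and> sd y x \<in> U}" by simp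
        thus "(\<alpha> x, \<alpha> y) \<in> \<epsilon>" using U(3) unfolding \<alpha>_def by blast
      qed
      thus "\<exists>\<delta>\<in>\<mu>. \<forall>x\<in>X. \<forall>y\<in>X. (x, y) \<in> \<delta> \<longrightarrow> (\<alpha> x, \<alpha> y) \<in> \<epsilon>" using c(1) by (rule bexI)
    qed
    show "\<forall>\<epsilon>\<in>\<mu>. \<exists>\<delta>\<in>right_group_uniformity EE TE. \<forall>x\<in>X. \<forall>y\<in>X. (\<alpha> x, \<alpha> y) \<in> \<delta> \<longrightarrow> (x, y) \<in> \<epsilon>"
    proof
      fix \<epsilon> assume "\<epsilon> \<in> \<mu>"
      then obtain c where c: "c \<in> \<mu>" "c \<subseteq> \<epsilon>" "equiv X c" using nab by blast
      have "lift c \<in> BB" using c unfolding BB_def by auto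
      then obtain U where U: "openin TE U" "{} \<in> U" "\<forall>x\<in>Y. \<forall>y\<in>Y. sd {y} {x} \<in> U \<longrightarrow> (x, y) \<in> lift c"
        using U2 by blast
      let ?d = "{(x, y). x \<in> Fin \<and> y \<in> Fin \<and> sd y x \<in> U}"
      have "?d \<in> right_group_uniformity EE TE" unfolding rgu using U by blast
      moreover have "\<forall>x\<in>X. \<forall>y\<in>X. (\<alpha> x, \<alpha> y) \<in> ?d \<longrightarrow> (x, y) \<in> \<epsilon>"
      proof (intro ballI impI)
        fix x y assume x: "x \<in> X" and y: "y \<in> X" and h: "(\<alpha> x, \<alpha> y) \<in> ?d"
        have "sd {{y}} {{x}} \<in> U" using h unfolding \<alpha>_def by simp
        moreover have "{x} \<in> Y" "{y} \<in> Y" using x y by (auto simp: Y_def)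
        ultimately have "({x}, {y}) \<in> lift c" using U(3) by blast
        hence "(x, y) \<in> c" by simp
        thus "(x, y) \<in> \<epsilon>" using c(2) by blast
      qed
      ultimately show "\<exists>\<delta>\<in>right_group_uniformity EE TE. \<forall>x\<in>X. \<forall>y\<in>X. (\<alpha> x, \<alpha> y) \<in> \<delta> \<longrightarrow> (x, y) \<in> \<epsilon>"
        by (rule bexI[rotated])
    qed
  qed
  have eqv: "\<forall>g\<in>carrier G. \<forall>x\<in>X. \<alpha> (\<pi> g x) = \<tau> g (\<alpha> x)"
  proof (intro ballI)
    fix g x assume g: "g \<in> carrier G" and x: "x \<in> X"
    have "{x} \<in> Y" using x by (simp add: Y_def)
    thus "\<alpha> (\<pi> g x) = \<tau> g (\<alpha> x)" unfolding \<alpha>_def using equivar[OF g] by simp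
  qed
  have main: "topological_group EE TE \<and> boolean_group EE \<and>
           Hausdorff_space TE \<and> non_archimedean_group EE TE \<and>
           continuous_action G T TE \<tau> \<and>
           (\<forall>g\<in>carrier G. \<tau> g \<in> iso EE EE) \<and>
           (\<forall>g\<in>carrier G. \<forall>x\<in>X. \<alpha> (\<pi> g x) = \<tau> g (\<alpha> x)) \<and>
           uniform_embedding X \<mu> (carrier EE) (right_group_uniformity EE TE) \<alpha> \<and>
           closedin TE (\<alpha> ` X)"
  proof (intro conjI)
    show "\<forall>g\<in>carrier G. \<tau> g \<in> iso EE EE" using iso_EE by blast
    show "closedin TE (\<alpha> ` X)" unfolding alphaX by (rule closed_sing)
  qed (rule topgroup_EE bool_EE Haus_EE nonarch_EE contact_EE eqv ue)+
  show ?thesis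
    by (rule exI[of _ EE], rule exI[of _ TE], rule exI[of _ \<tau>], rule exI[of _ \<alpha>], rule main)
qed

end
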